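(* Let $\theta\in\mathbb{R}^n$, $\sigma^2>0$, and $g:\mathbb{R}^n\to\mathbb{R}^n$ measurable. Suppose that for some $\beta>0$ and integer $k\ge0$, $$\mathbb{E}\big[\|g(Y_\beta)\|_2^2\,\|Y_\beta-\theta\|_2^{2m}\big]<\infty,\qquad m=0,\dots,k.$$ Then the map $\alpha\mapsto\mathrm{Risk}_\alpha(g)$ has $k$ continuous derivatives on $[0,\beta)$.
   Context: For $\alpha\ge0$, $Y_\alpha\sim N(\theta,(1+\alpha)\sigma^2 I_n)$ and $\mathrm{Risk}_\alpha(g)=\mathbb{E}\|\theta-g(Y_\alpha)\|_2^2$ (so $\mathrm{Risk}_0(g)=\mathrm{Risk}(g)$ is the ordinary risk under $Y\sim N(\theta,\sigma^2I_n)$). *)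

theory Defs
  imports "HOL-Probability.Probability"
begin

text \<open>Isotropic Gaussian N(theta, v I_n) on R^n = real^'n, as the product of
  the coordinatewise univariate normal densities (standard deviation sqrt v).\<close>
definition gauss_vec :: "real^'n \<Rightarrow> real \<Rightarrow> (real^'n) measure" where
  "gauss_vec \<theta> v = density lborel
     (\<lambda>y. ennreal (\<Prod>i\<in>UNIV. normal_density (\<theta> $ i) (sqrt v) (y $ i)))"

definition Y_law :: "real^'n \<Rightarrow> real \<Rightarrow> real \<Rightarrow> (real^'n) measure" where
  "Y_law \<theta> \<sigma>2 \<alpha> = gauss_vec \<theta> ((1 + \<alpha>) * \<sigma>2)"

definition Risk :: "real^'n \<Rightarrow> real \<Rightarrow> (real^'n \<Rightarrow> real^'n) \<Rightarrow> real \<Rightarrow> real" where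
  "Risk \<theta> \<sigma>2 g \<alpha> = (\<integral>y. (norm (\<theta> - g y))\<^sup>2 \<partial>(Y_law \<theta> \<sigma>2 \<alpha>))"

definition k_times_cont_diff_on :: "nat \<Rightarrow> (real \<Rightarrow> real) \<Rightarrow> real set \<Rightarrow> bool" where
  "k_times_cont_diff_on k f S \<longleftrightarrow>
     (\<exists>D :: nat \<Rightarrow> real \<Rightarrow> real.
        (\<forall>t\<in>S. D 0 t = f t) \<and>
        (\<forall>j<k. \<forall>t\<in>S. (D j has_real_derivative D (Suc j) t) (at t within S)) \<and>
        (\<forall>j\<le>k. continuous_on S (D j)))"

end

theory Submission
  imports Defs
begin


fun Ck :: "real set \<Rightarrow> nat \<Rightarrow> (real \<Rightarrow> real) \<Rightarrow> bool" where
  "Ck S 0 f = continuous_on S f"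
| "Ck S (Suc k) f = (continuous_on S f \<and> (\<exists>f'. (\<forall>t\<in>S. (f has_real_derivative f' t) (at t within S)) \<and> Ck S k f'))"

lemma deriv_cont: "(\<forall>t\<in>S. (f has_real_derivative f' t) (at t within S)) \<Longrightarrow> continuous_on S f"
  using DERIV_continuous continuous_on_eq_continuous_within by blast

lemma Ck_cont: "Ck S k f \<Longrightarrow> continuous_on S f"
  by (cases k) auto

lemma Ck_SucI: "(\<forall>t\<in>S. (f has_real_derivative f' t) (at t within S)) \<Longrightarrow> Ck S k f' \<Longrightarrow> Ck S (Suc k) f"
  using deriv_cont by auto

lemma Ck_mono: "Ck S (Suc k) f \<Longrightarrow> Ck S k f"
proof (induction k arbitrary: f)
  case 0 then show ?case by auto
next
  case (Suc k)
  from Suc.prems obtain f' where dd: "\<forall>t\<in>S. (f has_real_derivative f' t) (at t within S)" and c: "Ck S (Suc k) f'" by auto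
  show ?case using Ck_SucI[OF dd Suc.IH[OF c]] .
qed

lemma Ck_cong: assumes a: "Ck S k f" "\<And>t. t \<in> S \<Longrightarrow> f t = g t" shows "Ck S k g"
proof (cases k)
  case 0 then show ?thesis using a continuous_on_cong by (metis Ck.simps(1))
next
  case (Suc m)
  then obtain f' where d: "\<forall>t\<in>S. (f has_real_derivative f' t) (at t within S)" "Ck S m f'" using a(1) Suc by auto
  have dd: "\<forall>t\<in>S. (g has_real_derivative f' t) (at t within S)"
  proof
    fix t assume t: "t \<in> S"
    show "(g has_real_derivative f' t) (at t within S)"
      using has_field_derivative_transform_within[OF d(1)[rule_format, OF t], of 1 g] t a(2) by auto
  qed
  show ?thesis unfolding Suc using Ck_SucI[OF dd d(2)] .
qed

lemma Ck_const: "Ck S k (\<lambda>t. c)"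
proof (induction k arbitrary: c)
  case 0 then show ?case by auto
next
  case (Suc k)
  have dd: "\<forall>t\<in>S. ((\<lambda>t. c) has_real_derivative (\<lambda>t. 0) t) (at t within S)" by auto
  show ?case using Ck_SucI[OF dd Suc.IH] .
qed

lemma Ck_add: "Ck S k f \<Longrightarrow> Ck S k g \<Longrightarrow> Ck S k (\<lambda>t. f t + g t)"
proof (induction k arbitrary: f g)
  case 0 then show ?case by (auto intro: continuous_on_add)
next
  case (Suc k)
  from Suc.prems obtain f' g' where d: "\<forall>t\<in>S. (f has_real_derivative f' t) (at t within S)" "Ck S k f'"
    "\<forall>t\<in>S. (g has_real_derivative g' t) (at t within S)" "Ck S k g'" by auto
  have dd: "\<forall>t\<in>S. ((\<lambda>t. f t + g t) has_real_derivative (\<lambda>t. f' t + g' t) t) (at t within S)"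
    using d by (auto intro: derivative_intros)
  show ?case using Ck_SucI[OF dd Suc.IH[OF d(2) d(4)]] .
qed

lemma Ck_mult: "Ck S k f \<Longrightarrow> Ck S k g \<Longrightarrow> Ck S k (\<lambda>t. f t * g t)"
proof (induction k arbitrary: f g)
  case 0 then show ?case by (auto intro: continuous_on_mult)
next
  case (Suc k)
  from Suc.prems obtain f' g' where d: "\<forall>t\<in>S. (f has_real_derivative f' t) (at t within S)" "Ck S k f'"
    "\<forall>t\<in>S. (g has_real_derivative g' t) (at t within S)" "Ck S k g'" by auto
  have dd: "\<forall>t\<in>S. ((\<lambda>t. f t * g t) has_real_derivative (\<lambda>t. f' t * g t + g' t * f t) t) (at t within S)"
    using d by (auto intro: DERIV_mult)
  have cc: "Ck S k (\<lambda>t. f' t * g t + g' t * f t)"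
  proof (rule Ck_add)
    show "Ck S k (\<lambda>t. f' t * g t)" using Suc.IH[OF d(2) Ck_mono[OF Suc.prems(2)]] .
    show "Ck S k (\<lambda>t. g' t * f t)" using Suc.IH[OF d(4) Ck_mono[OF Suc.prems(1)]] .
  qed
  show ?case using Ck_SucI[OF dd cc] .
qed

lemma Ck_cmult: "Ck S k f \<Longrightarrow> Ck S k (\<lambda>t. c * f t)"
  by (rule Ck_mult[OF Ck_const])

lemma Ck_comp:
  assumes "open T" "\<And>t. t \<in> S \<Longrightarrow> \<phi> t \<in> T"
  shows "Ck T k f \<Longrightarrow> Ck S k \<phi> \<Longrightarrow> Ck S k (\<lambda>t. f (\<phi> t))"
proof (induction k arbitrary: f)
  case 0
  have "\<phi> ` S \<subseteq> T" using assms(2) by auto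
  then show ?case using 0 continuous_on_compose2[of T f S \<phi>] by auto
next
  case (Suc k)
  from Suc.prems obtain f' \<phi>' where d: "\<forall>t\<in>T. (f has_real_derivative f' t) (at t within T)" "Ck T k f'"
    "\<forall>t\<in>S. (\<phi> has_real_derivative \<phi>' t) (at t within S)" "Ck S k \<phi>'" by auto
  have dd: "\<forall>t\<in>S. ((\<lambda>t. f (\<phi> t)) has_real_derivative (\<lambda>t. f' (\<phi> t) * \<phi>' t) t) (at t within S)"
  proof
    fix t assume t: "t \<in> S"
    have pt: "\<phi> t \<in> T" using assms(2) t .
    have "(f has_real_derivative f' (\<phi> t)) (at (\<phi> t) within T)" using d(1) pt by blast
    then have "(f has_real_derivative f' (\<phi> t)) (at (\<phi> t))"
      by (simp add: at_within_open[OF pt assms(1)])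
    then show "((\<lambda>t. f (\<phi> t)) has_real_derivative (\<lambda>t. f' (\<phi> t) * \<phi>' t) t) (at t within S)"
      using DERIV_chain[OF _ d(3)[rule_format, OF t]] by (simp add: o_def)
  qed
  have "Ck S k (\<lambda>t. f' (\<phi> t))"
    using Suc.IH[OF d(2) Ck_mono[OF Suc.prems(2)]] .
  then have cc: "Ck S k (\<lambda>t. f' (\<phi> t) * \<phi>' t)" using Ck_mult d(4) by blast
  show ?case using Ck_SucI[OF dd cc] .
qed

lemma Ck_powr: "Ck {0<..} k (\<lambda>t. t powr a)"
proof (induction k arbitrary: a)
  case 0
  have "\<forall>t\<in>{0<..}. ((\<lambda>t. t powr a) has_real_derivative a * t powr (a - 1)) (at t within {0<..})"
    using has_field_derivative_at_within[OF has_real_derivative_powr] by auto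
  then show ?case using deriv_cont by auto
next
  case (Suc k)
  have dd: "\<forall>t\<in>{0<..}. ((\<lambda>t. t powr a) has_real_derivative (\<lambda>t. a * t powr (a - 1)) t) (at t within {0<..})"
    using has_field_derivative_at_within[OF has_real_derivative_powr] by auto
  have cc: "Ck {0<..} k (\<lambda>t. a * t powr (a - 1))" using Ck_cmult[OF Suc.IH] .
  show ?case using Ck_SucI[OF dd cc] .
qed

lemma Ck_affine: "Ck S k (\<lambda>t. a + b * t)"
proof (cases k)
  case 0 then show ?thesis by (auto intro!: continuous_intros)
next
  case (Suc m)
  have dd: "\<forall>t\<in>S. ((\<lambda>t. a + b * t) has_real_derivative (\<lambda>t. b) t) (at t within S)"
  proof
    fix t
    have "((\<lambda>t. a + b * t) has_real_derivative 0 + b * 1) (at t within S)"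
      by (intro DERIV_add DERIV_const DERIV_cmult DERIV_ident)
    then show "((\<lambda>t. a + b * t) has_real_derivative (\<lambda>t. b) t) (at t within S)" by simp
  qed
  show ?thesis unfolding Suc using Ck_SucI[OF dd Ck_const] .
qed

lemma Ck_imp: "Ck S k f \<Longrightarrow> k_times_cont_diff_on k f S"
proof (induction k arbitrary: f)
  case 0 then show ?case unfolding k_times_cont_diff_on_def
    by (intro exI[of _ "\<lambda>j. f"]) auto
next
  case (Suc k)
  from Suc.prems obtain f' where d: "\<forall>t\<in>S. (f has_real_derivative f' t) (at t within S)" "Ck S k f'"
     "continuous_on S f" by auto
  then obtain D where D: "\<forall>t\<in>S. D 0 t = f' t" "\<forall>j<k. \<forall>t\<in>S. (D j has_real_derivative D (Suc j) t) (at t within S)"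
     "\<forall>j\<le>k. continuous_on S (D j)" using Suc.IH unfolding k_times_cont_diff_on_def by blast
  define E where "E j = (case j of 0 \<Rightarrow> f | Suc i \<Rightarrow> D i)" for j
  have e1: "\<forall>j<Suc k. \<forall>t\<in>S. (E j has_real_derivative E (Suc j) t) (at t within S)"
  proof (intro allI impI ballI)
    fix j t assume j: "j < Suc k" and t: "t \<in> S"
    show "(E j has_real_derivative E (Suc j) t) (at t within S)"
    proof (cases j)
      case 0 then show ?thesis using d(1) D(1) t by (simp add: E_def)
    next
      case (Suc i) then show ?thesis using D(2) j t by (simp add: E_def)
    qed
  qed
  have e2: "\<forall>j\<le>Suc k. continuous_on S (E j)"
  proof (intro allI impI)
    fix j assume "j \<le> Suc k"
    then show "continuous_on S (E j)" using D(3) d(3) by (cases j) (auto simp: E_def)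
  qed
  have e0: "\<forall>t\<in>S. E 0 t = f t" by (simp add: E_def)
  show ?case unfolding k_times_cont_diff_on_def by (rule exI[of _ E]) (intro conjI e0 e1 e2)
qed



lemma exp_ge_pow_fact:
  fixes x :: real assumes "0 \<le> x" shows "x ^ j / fact j \<le> exp x"
proof -
  have "(\<Sum>i\<in>{j}. inverse (fact i) *\<^sub>R x ^ i) \<le> (\<Sum>n. inverse (fact n) *\<^sub>R x ^ n)"
    by (rule sum_le_suminf[OF summable_exp_generic]) (use assms in auto)
  then show ?thesis by (simp add: exp_def divide_inverse mult.commute)
qed

lemma pow_exp_bound:
  fixes p e :: real assumes "0 \<le> p" "0 < e" shows "p ^ m * exp (- e * p) \<le> fact m / e ^ m"
proof -
  have "(e * p) ^ m / fact m \<le> exp (e * p)" using assms by (intro exp_ge_pow_fact) auto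
  then have "e ^ m * p ^ m \<le> fact m * exp (e * p)"
    by (simp add: power_mult_distrib field_simps)
  then have "e ^ m * p ^ m * exp (- e * p) \<le> fact m * exp (e * p) * exp (- e * p)"
    by (intro mult_right_mono) auto
  also have "\<dots> = fact m" by (simp add: mult.assoc exp_add[symmetric])
  finally have "e ^ m * (p ^ m * exp (- e * p)) \<le> fact m" by (simp add: mult.assoc)
  then show ?thesis using assms by (simp add: field_simps)
qed

lemma dct_at:
  fixes s :: "real \<Rightarrow> 'a \<Rightarrow> real"
  assumes f: "f \<in> borel_measurable M" and w: "integrable M w"
    and ev: "\<forall>\<^sub>F t in at x0. s t \<in> borel_measurable M \<and> (\<forall>x\<in>space M. norm (s t x) \<le> w x)"
    and lim: "\<And>x. x \<in> space M \<Longrightarrow> ((\<lambda>t. s t x) \<longlongrightarrow> f x) (at x0)"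
  shows "((\<lambda>t. integral\<^sup>L M (s t)) \<longlongrightarrow> integral\<^sup>L M f) (at x0)"
proof (rule tendsto_at_iff_sequentially[THEN iffD2], intro allI impI)
  fix X :: "nat \<Rightarrow> real" assume X: "\<forall>i. X i \<in> UNIV - {x0}" "X \<longlonglongrightarrow> x0"
  then have "filterlim X (at x0) sequentially"
    by (auto simp: filterlim_at)
  from filterlim_iff[THEN iffD1, OF this, rule_format, OF ev]
  obtain N where N: "\<And>n. N \<le> n \<Longrightarrow> s (X n) \<in> borel_measurable M \<and> (\<forall>x\<in>space M. norm (s (X n) x) \<le> w x)"
    by (auto simp: eventually_sequentially)
  have "(\<lambda>n. integral\<^sup>L M (s (X (n + N)))) \<longlonglongrightarrow> integral\<^sup>L M f"
  proof (rule integral_dominated_convergence[OF f _ w])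
    show "\<And>i. s (X (i + N)) \<in> borel_measurable M" using N by auto
    show "AE x in M. (\<lambda>i. s (X (i + N)) x) \<longlonglongrightarrow> f x"
    proof (rule AE_I2)
      fix x assume "x \<in> space M"
      then have "((\<lambda>t. s t x) \<longlongrightarrow> f x) (at x0)" by (rule lim)
      from filterlim_compose[OF this \<open>filterlim X (at x0) sequentially\<close>]
      have "(\<lambda>n. s (X n) x) \<longlonglongrightarrow> f x" .
      then show "(\<lambda>i. s (X (i + N)) x) \<longlonglongrightarrow> f x"
        by (rule LIMSEQ_ignore_initial_segment)
    qed
    show "\<And>i. AE x in M. norm (s (X (i + N)) x) \<le> w x"
      using N by (intro AE_I2) auto
  qed
  then have "(\<lambda>n. integral\<^sup>L M (s (X n))) \<longlonglongrightarrow> integral\<^sup>L M f"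
    by (rule LIMSEQ_offset)
  then show "((\<lambda>t. integral\<^sup>L M (s t)) \<circ> X) \<longlonglongrightarrow> integral\<^sup>L M f" by (simp add: o_def)
qed

lemma deriv_integral:
  fixes f f' :: "real \<Rightarrow> 'a \<Rightarrow> real"
  assumes e: "0 < e"
    and fm: "\<And>t. t \<in> ball s e \<Longrightarrow> f t \<in> borel_measurable M"
    and f'm: "f' s \<in> borel_measurable M"
    and deriv: "\<And>t x. t \<in> ball s e \<Longrightarrow> x \<in> space M \<Longrightarrow> ((\<lambda>t. f t x) has_real_derivative f' t x) (at t)"
    and fi: "integrable M (f s)" and w: "integrable M w"
    and bound: "\<And>t x. t \<in> ball s e \<Longrightarrow> x \<in> space M \<Longrightarrow> \<bar>f' t x\<bar> \<le> w x"
  shows "((\<lambda>t. \<integral>x. f t x \<partial>M) has_real_derivative (\<integral>x. f' s x \<partial>M)) (at s)"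
proof -
  define q where "q t x = (f t x - f s x) / (t - s)" for t x
  have qb: "\<bar>q t x\<bar> \<le> w x" if t: "t \<in> ball s e" "t \<noteq> s" and x: "x \<in> space M" for t x
  proof -
    have between: "\<And>z. min s t \<le> z \<Longrightarrow> z \<le> max s t \<Longrightarrow> z \<in> ball s e"
      using t by (auto simp: dist_real_def)
    have "\<exists>z. min s t < z \<and> z < max s t \<and> f (max s t) x - f (min s t) x = (max s t - min s t) * f' z x"
      by (rule MVT2) (use t between deriv x in auto)
    then obtain z where z: "min s t < z" "z < max s t" "f (max s t) x - f (min s t) x = (max s t - min s t) * f' z x"
      by blast
    have "q t x = f' z x"
    proof (cases "s < t")
      case True then show ?thesis using z(3) by (simp add: q_def max_def min_def)
    next
      case False
      then have "t < s" using t by auto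
      then show ?thesis using z(3) by (simp add: q_def max_def min_def field_simps)
    qed
    then show ?thesis using bound[of z x] between[of z] z x by auto
  qed
  have qm: "q t \<in> borel_measurable M" if "t \<in> ball s e" for t
  proof -
    have sm: "f s \<in> borel_measurable M" using fm e by simp
    show ?thesis unfolding q_def using fm[OF that] sm by measurable
  qed
  have qi: "integrable M (q t)" if "t \<in> ball s e" "t \<noteq> s" for t
    by (rule Bochner_Integration.integrable_bound[OF w qm[OF that(1)]])
       (use qb[OF that] in \<open>auto intro!: AE_I2 intro: order_trans[OF _ abs_ge_self]\<close>)
  have eq: "(integral\<^sup>L M (f t) - integral\<^sup>L M (f s)) / (t - s) = integral\<^sup>L M (q t)"
    if "t \<in> ball s e" "t \<noteq> s" for t
  proof -
    have "integrable M (\<lambda>x. f s x + (t - s) * q t x)"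
      by (intro Bochner_Integration.integrable_add fi integrable_mult_right qi that)
    moreover have "integrable M (\<lambda>x. f s x + (t - s) * q t x) = integrable M (f t)"
      by (rule Bochner_Integration.integrable_cong) (use that in \<open>auto simp: q_def\<close>)
    ultimately have fit: "integrable M (f t)" by simp
    have "integral\<^sup>L M (q t) = (integral\<^sup>L M (\<lambda>x. f t x - f s x)) / (t - s)"
      unfolding q_def by (rule integral_divide_zero)
    also have "\<dots> = (integral\<^sup>L M (f t) - integral\<^sup>L M (f s)) / (t - s)"
      using fit fi by simp
    finally show ?thesis by simp
  qed
  have "((\<lambda>t. integral\<^sup>L M (q t)) \<longlongrightarrow> (\<integral>x. f' s x \<partial>M)) (at s)"
  proof (rule dct_at[OF f'm w])
    show "\<forall>\<^sub>F t in at s. q t \<in> borel_measurable M \<and> (\<forall>x\<in>space M. norm (q t x) \<le> w x)"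
      unfolding eventually_at using e qm qb by (intro exI[of _ e]) (auto simp: dist_commute)
    show "((\<lambda>t. q t x) \<longlongrightarrow> f' s x) (at s)" if "x \<in> space M" for x
      using deriv[OF _ that, of s] e unfolding has_field_derivative_iff q_def by simp
  qed
  moreover have "\<forall>\<^sub>F t in at s. integral\<^sup>L M (q t) = (integral\<^sup>L M (f t) - integral\<^sup>L M (f s)) / (t - s)"
    unfolding eventually_at using e eq by (intro exI[of _ e]) (auto simp: dist_commute)
  ultimately have "((\<lambda>t. (integral\<^sup>L M (f t) - integral\<^sup>L M (f s)) / (t - s)) \<longlongrightarrow> (\<integral>x. f' s x \<partial>M)) (at s)"
    by (rule Lim_transform_eventually)
  then show ?thesis unfolding has_field_derivative_iff .
qed



definition pd :: "real^'n \<Rightarrow> real^'n \<Rightarrow> real" where "pd \<theta> y = (norm (y - \<theta>))\<^sup>2"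

lemma pd_nonneg: "0 \<le> pd \<theta> y" by (simp add: pd_def)

lemma pd_sum: "pd \<theta> y = (\<Sum>i\<in>UNIV. (y $ i - \<theta> $ i)\<^sup>2)"
  by (simp add: pd_def norm_vec_def L2_set_def sum_nonneg)

lemma pd_meas[measurable]: "pd \<theta> \<in> borel_measurable borel"
  unfolding pd_def by measurable

lemma prod_nd:
  fixes \<theta> y :: "real^'n" assumes v: "0 < v"
  shows "(\<Prod>i\<in>UNIV. normal_density (\<theta> $ i) (sqrt v) (y $ i))
       = (1 / sqrt (2 * pi * v)) ^ CARD('n) * exp (- pd \<theta> y / (2 * v))"
proof -
  have "(\<Prod>i\<in>UNIV. normal_density (\<theta> $ i) (sqrt v) (y $ i))
      = (\<Prod>i\<in>UNIV. (1 / sqrt (2 * pi * v)) * exp (- (y $ i - \<theta> $ i)\<^sup>2 / (2 * v)))"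
    using v by (simp add: normal_density_def)
  also have "\<dots> = (1 / sqrt (2 * pi * v)) ^ CARD('n) * (\<Prod>i\<in>UNIV. exp (- (y $ i - \<theta> $ i)\<^sup>2 / (2 * v)))"
    by (subst prod.distrib) (simp add: prod_constant)
  also have "(\<Prod>i\<in>UNIV. exp (- (y $ i - \<theta> $ i)\<^sup>2 / (2 * v))) = exp (\<Sum>i\<in>UNIV. - (y $ i - \<theta> $ i)\<^sup>2 / (2 * v))"
    by (simp add: exp_sum)
  also have "(\<Sum>i\<in>UNIV. - (y $ i - \<theta> $ i)\<^sup>2 / (2 * v)) = - pd \<theta> y / (2 * v)"
    by (simp add: pd_sum sum_divide_distrib[symmetric] sum_negf)
  finally show ?thesis .
qed

lemma nn_integral_nd_one:
  fixes \<theta> :: "real^'n" assumes sd: "0 < sd"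
  shows "(\<integral>\<^sup>+y. ennreal (\<Prod>i\<in>UNIV. normal_density (\<theta> $ i) sd (y $ i)) \<partial>lborel) = 1"
proof -
  have B: "(Basis :: (real^'n) set) = (\<lambda>i. axis i 1) ` UNIV"
    by (auto simp: Basis_vec_def)
  have inj: "inj_on (\<lambda>i::'n. axis i (1::real)) UNIV"
    by (auto simp: inj_on_def axis_eq_axis)
  have eq: "ennreal (\<Prod>i\<in>UNIV. normal_density (\<theta> $ i) sd (y $ i))
     = (\<Prod>b\<in>Basis. ennreal (normal_density (\<theta> \<bullet> b) sd (y \<bullet> b)))" for y :: "real^'n"
  proof -
    have "(\<Prod>b\<in>Basis. ennreal (normal_density (\<theta> \<bullet> b) sd (y \<bullet> b)))
        = (\<Prod>i\<in>UNIV. ennreal (normal_density (\<theta> \<bullet> axis i 1) sd (y \<bullet> axis i 1)))"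
      unfolding B by (subst prod.reindex[OF inj]) (simp add: o_def)
    also have "\<dots> = (\<Prod>i\<in>UNIV. ennreal (normal_density (\<theta> $ i) sd (y $ i)))"
      by (simp add: cart_eq_inner_axis)
    also have "\<dots> = ennreal (\<Prod>i\<in>UNIV. normal_density (\<theta> $ i) sd (y $ i))"
      by (rule prod_ennreal) simp
    finally show ?thesis by simp
  qed
  have one: "(\<integral>\<^sup>+x. ennreal (normal_density \<mu> sd x) \<partial>lborel) = 1" for \<mu>
    using nn_integral_eq_integral[OF integrable_normal_density[OF sd]] sd by simp
  have "(\<integral>\<^sup>+y. ennreal (\<Prod>i\<in>UNIV. normal_density (\<theta> $ i) sd (y $ i)) \<partial>lborel)
      = (\<integral>\<^sup>+y. (\<Prod>b\<in>Basis. ennreal (normal_density (\<theta> \<bullet> b) sd (y \<bullet> b))) \<partial>lborel)"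
    by (simp add: eq)
  also have "\<dots> = (\<Prod>b\<in>(Basis :: (real^'n) set). (\<integral>\<^sup>+x. ennreal (normal_density (\<theta> \<bullet> b) sd x) \<partial>lborel))"
    by (rule nn_integral_lborel_prod) auto
  also have "\<dots> = 1" by (simp add: one)
  finally show ?thesis .
qed

lemma integrable_nd:
  fixes \<theta> :: "real^'n" assumes sd: "0 < sd"
  shows "integrable lborel (\<lambda>y. \<Prod>i\<in>UNIV. normal_density (\<theta> $ i) sd (y $ i))"
  by (rule integrableI_nonneg) (auto simp: nn_integral_nd_one[OF sd] prod_nonneg)

lemma integrable_exp_pd:
  fixes \<theta> :: "real^'n" assumes s: "0 < s"
  shows "integrable lborel (\<lambda>y. exp (- s * pd \<theta> y))"
proof -
  define v where "v = 1 / (2 * s)"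
  have v: "0 < v" using s by (simp add: v_def)
  define K where "K = (1 / sqrt (2 * pi * v)) ^ CARD('n)"
  have K: "0 < K" using v by (simp add: K_def)
  have "integrable lborel (\<lambda>y. (1 / K) * (\<Prod>i\<in>UNIV. normal_density (\<theta> $ i) (sqrt v) (y $ i)))"
    using integrable_nd[of "sqrt v" \<theta>] v by simp
  moreover have "(1 / K) * (\<Prod>i\<in>UNIV. normal_density (\<theta> $ i) (sqrt v) (y $ i)) = exp (- s * pd \<theta> y)" for y
    using K s unfolding prod_nd[OF v] K_def[symmetric] by (simp add: v_def field_simps)
  ultimately show ?thesis by simp
qed



definition hh :: "real^'n \<Rightarrow> (real^'n \<Rightarrow> real^'n) \<Rightarrow> real^'n \<Rightarrow> real" where
  "hh \<theta> g y = (norm (\<theta> - g y))\<^sup>2"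

definition MM :: "real^'n \<Rightarrow> (real^'n \<Rightarrow> real^'n) \<Rightarrow> nat \<Rightarrow> real \<Rightarrow> real" where
  "MM \<theta> g j s = (\<integral>y. hh \<theta> g y * pd \<theta> y ^ j * exp (- s * pd \<theta> y) \<partial>lborel)"

lemma hh_nonneg: "0 \<le> hh \<theta> g y" by (simp add: hh_def)

lemma hh_meas: assumes gm: "g \<in> borel_measurable lborel" shows "hh \<theta> g \<in> borel_measurable lborel"
proof -
  have [measurable]: "g \<in> borel_measurable borel" using gm by (simp add: measurable_lborel1)
  show ?thesis unfolding hh_def measurable_lborel1 by measurable
qed

lemma pd_meas_lb[measurable]: "pd \<theta> \<in> borel_measurable lborel"
  using pd_meas by (simp add: measurable_lborel1)

lemma hh_bound: "hh \<theta> g y \<le> 2 * (norm \<theta>)\<^sup>2 + 2 * (norm (g y))\<^sup>2"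
proof -
  have "norm (\<theta> - g y) \<le> norm \<theta> + norm (g y)" by (rule norm_triangle_ineq4)
  then have "(norm (\<theta> - g y))\<^sup>2 \<le> (norm \<theta> + norm (g y))\<^sup>2" by (intro power_mono) auto
  also have "\<dots> \<le> 2 * (norm \<theta>)\<^sup>2 + 2 * (norm (g y))\<^sup>2"
    using sum_squares_ge_zero[of "norm \<theta> - norm (g y)" 0] by (simp add: power2_eq_square algebra_simps)
  finally show ?thesis by (simp add: hh_def)
qed

lemma int_g:
  fixes \<theta> :: "real^'n"
  assumes v: "0 < v" and gm: "g \<in> borel_measurable lborel"
    and hyp: "(\<integral>\<^sup>+ y. ennreal ((norm (g y))\<^sup>2) \<partial>(gauss_vec \<theta> v)) < \<infinity>"
  shows "integrable lborel (\<lambda>y. (norm (g y))\<^sup>2 * exp (- (1 / (2 * v)) * pd \<theta> y))"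
proof -
  define K where "K = (1 / sqrt (2 * pi * v)) ^ CARD('n)"
  have K: "0 < K" using v by (simp add: K_def)
  have m1: "(\<lambda>y::real^'n. ennreal (\<Prod>i\<in>UNIV. normal_density (\<theta> $ i) (sqrt v) (y $ i))) \<in> borel_measurable lborel"
    by measurable
  have m2: "(\<lambda>y. ennreal ((norm (g y))\<^sup>2)) \<in> borel_measurable lborel" using gm by measurable
  have "(\<integral>\<^sup>+ y. ennreal ((norm (g y))\<^sup>2) \<partial>(gauss_vec \<theta> v))
      = (\<integral>\<^sup>+ y. ennreal (\<Prod>i\<in>UNIV. normal_density (\<theta> $ i) (sqrt v) (y $ i)) * ennreal ((norm (g y))\<^sup>2) \<partial>lborel)"
    unfolding gauss_vec_def by (rule nn_integral_density[OF m1 m2])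
  also have "\<dots> = (\<integral>\<^sup>+ y. ennreal ((\<Prod>i\<in>UNIV. normal_density (\<theta> $ i) (sqrt v) (y $ i)) * (norm (g y))\<^sup>2) \<partial>lborel)"
    by (intro nn_integral_cong) (simp add: ennreal_mult prod_nonneg)
  finally have fin: "(\<integral>\<^sup>+ y. ennreal ((\<Prod>i\<in>UNIV. normal_density (\<theta> $ i) (sqrt v) (y $ i)) * (norm (g y))\<^sup>2) \<partial>lborel) < \<infinity>"
    using hyp by simp
  have "integrable lborel (\<lambda>y. (\<Prod>i\<in>UNIV. normal_density (\<theta> $ i) (sqrt v) (y $ i)) * (norm (g y))\<^sup>2)"
    by (rule integrableI_nonneg) (use fin gm in \<open>auto simp: prod_nonneg\<close>)
  then have "integrable lborel (\<lambda>y. (1 / K) * ((\<Prod>i\<in>UNIV. normal_density (\<theta> $ i) (sqrt v) (y $ i)) * (norm (g y))\<^sup>2))"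
    by simp
  moreover have "(1 / K) * ((\<Prod>i\<in>UNIV. normal_density (\<theta> $ i) (sqrt v) (y $ i)) * (norm (g y))\<^sup>2)
     = (norm (g y))\<^sup>2 * exp (- (1 / (2 * v)) * pd \<theta> y)" for y
    using K v unfolding prod_nd[OF v] K_def[symmetric] by (simp add: field_simps)
  ultimately show ?thesis by simp
qed

lemma int_W:
  fixes \<theta> :: "real^'n"
  assumes s0: "0 < s0" and gm: "g \<in> borel_measurable lborel"
    and ig: "integrable lborel (\<lambda>y. (norm (g y))\<^sup>2 * exp (- s0 * pd \<theta> y))"
  shows "integrable lborel (\<lambda>y. hh \<theta> g y * exp (- s0 * pd \<theta> y))"
proof (rule Bochner_Integration.integrable_bound)
  show "integrable lborel (\<lambda>y. 2 * (norm \<theta>)\<^sup>2 * exp (- s0 * pd \<theta> y) + 2 * ((norm (g y))\<^sup>2 * exp (- s0 * pd \<theta> y)))"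
    using integrable_exp_pd[OF s0, of \<theta>] ig by (intro Bochner_Integration.integrable_add integrable_mult_right)
  show "(\<lambda>y. hh \<theta> g y * exp (- s0 * pd \<theta> y)) \<in> borel_measurable lborel"
    using hh_meas[OF gm] by measurable
  show "AE y in lborel. norm (hh \<theta> g y * exp (- s0 * pd \<theta> y))
      \<le> norm (2 * (norm \<theta>)\<^sup>2 * exp (- s0 * pd \<theta> y) + 2 * ((norm (g y))\<^sup>2 * exp (- s0 * pd \<theta> y)))"
  proof (rule AE_I2)
    fix y
    have "hh \<theta> g y * exp (- s0 * pd \<theta> y) \<le> (2 * (norm \<theta>)\<^sup>2 + 2 * (norm (g y))\<^sup>2) * exp (- s0 * pd \<theta> y)"
      by (intro mult_right_mono hh_bound) auto
    then show "norm (hh \<theta> g y * exp (- s0 * pd \<theta> y))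
      \<le> norm (2 * (norm \<theta>)\<^sup>2 * exp (- s0 * pd \<theta> y) + 2 * ((norm (g y))\<^sup>2 * exp (- s0 * pd \<theta> y)))"
      using hh_nonneg[of \<theta> g y] by (simp add: algebra_simps)
  qed
qed

lemma M_bound:
  fixes p h :: real
  assumes "0 \<le> p" "0 \<le> h" "0 < e" "e \<le> t - s0"
  shows "h * p ^ m * exp (- t * p) \<le> fact m / e ^ m * (h * exp (- s0 * p))"
proof -
  have "exp (- t * p) = exp (- (t - s0) * p) * exp (- s0 * p)"
    by (simp add: exp_add[symmetric] algebra_simps)
  moreover have "exp (- (t - s0) * p) \<le> exp (- e * p)"
  proof -
    have "e * p \<le> (t - s0) * p" using assms by (intro mult_right_mono) auto
    then show ?thesis by (simp add: algebra_simps)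
  qed
  ultimately have "p ^ m * exp (- t * p) \<le> p ^ m * exp (- e * p) * exp (- s0 * p)"
    using assms by (simp add: mult_left_mono mult_right_mono mult.assoc[symmetric])
  also have "\<dots> \<le> fact m / e ^ m * exp (- s0 * p)"
    using pow_exp_bound[OF assms(1,3), of m] by (intro mult_right_mono) auto
  finally have "p ^ m * exp (- t * p) \<le> fact m / e ^ m * exp (- s0 * p)" .
  then have "h * (p ^ m * exp (- t * p)) \<le> h * (fact m / e ^ m * exp (- s0 * p))"
    using assms by (intro mult_left_mono) auto
  then show ?thesis by (simp add: algebra_simps)
qed



lemma M_int:
  fixes \<theta> :: "real^'n"
  assumes gm: "g \<in> borel_measurable lborel"
    and W: "integrable lborel (\<lambda>y. hh \<theta> g y * exp (- s0 * pd \<theta> y))"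
    and s: "s0 < s"
  shows "integrable lborel (\<lambda>y. hh \<theta> g y * pd \<theta> y ^ j * exp (- s * pd \<theta> y))"
proof (rule Bochner_Integration.integrable_bound[OF integrable_mult_right[OF W, of "fact j / (s - s0) ^ j"]])
  show "(\<lambda>y. hh \<theta> g y * pd \<theta> y ^ j * exp (- s * pd \<theta> y)) \<in> borel_measurable lborel"
    using hh_meas[OF gm] by measurable
  have bd: "norm (hh \<theta> g y * pd \<theta> y ^ j * exp (- s * pd \<theta> y))
     \<le> norm (fact j / (s - s0) ^ j * (hh \<theta> g y * exp (- s0 * pd \<theta> y)))" for y
  proof -
    have "hh \<theta> g y * pd \<theta> y ^ j * exp (- s * pd \<theta> y) \<le> fact j / (s - s0) ^ j * (hh \<theta> g y * exp (- s0 * pd \<theta> y))"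
      using s by (intro M_bound pd_nonneg hh_nonneg) auto
    moreover have nn1: "0 \<le> hh \<theta> g y * pd \<theta> y ^ j * exp (- s * pd \<theta> y)"
      using hh_nonneg[of \<theta> g y] pd_nonneg[of \<theta> y] by simp
    moreover have nn2: "0 \<le> fact j / (s - s0) ^ j * (hh \<theta> g y * exp (- s0 * pd \<theta> y))"
      using hh_nonneg[of \<theta> g y] s by simp
    ultimately show ?thesis by (simp only: real_norm_def)
  qed
  show "AE y in lborel. norm (hh \<theta> g y * pd \<theta> y ^ j * exp (- s * pd \<theta> y))
     \<le> norm (fact j / (s - s0) ^ j * (hh \<theta> g y * exp (- s0 * pd \<theta> y)))"
    by (intro AE_I2 bd)
qed

lemma M_deriv:
  fixes \<theta> :: "real^'n"
  assumes gm: "g \<in> borel_measurable lborel"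
    and W: "integrable lborel (\<lambda>y. hh \<theta> g y * exp (- s0 * pd \<theta> y))"
    and s: "s0 < s"
  shows "(MM \<theta> g j has_real_derivative - MM \<theta> g (Suc j) s) (at s)"
proof -
  define e where "e = (s - s0) / 2"
  have e: "0 < e" using s by (simp add: e_def)
  have "((\<lambda>t. \<integral>y. hh \<theta> g y * pd \<theta> y ^ j * exp (- t * pd \<theta> y) \<partial>lborel) has_real_derivative
         (\<integral>y. - (hh \<theta> g y * pd \<theta> y ^ Suc j * exp (- s * pd \<theta> y)) \<partial>lborel)) (at s)"
  proof (rule deriv_integral[OF e])
    show "(\<lambda>y. hh \<theta> g y * pd \<theta> y ^ j * exp (- t * pd \<theta> y)) \<in> borel_measurable lborel" for t
      using hh_meas[OF gm] by measurable
    show "(\<lambda>y. - (hh \<theta> g y * pd \<theta> y ^ Suc j * exp (- s * pd \<theta> y))) \<in> borel_measurable lborel"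
      using hh_meas[OF gm] by measurable
    show "((\<lambda>t. hh \<theta> g y * pd \<theta> y ^ j * exp (- t * pd \<theta> y)) has_real_derivative
             - (hh \<theta> g y * pd \<theta> y ^ Suc j * exp (- t * pd \<theta> y))) (at t)" for t y
    proof -
      have "((\<lambda>t. hh \<theta> g y * pd \<theta> y ^ j * exp (- t * pd \<theta> y)) has_real_derivative
             hh \<theta> g y * pd \<theta> y ^ j * (exp (- t * pd \<theta> y) * (- 1 * pd \<theta> y))) (at t)"
        by (rule DERIV_cmult[OF DERIV_fun_exp[OF DERIV_cmult_right[OF DERIV_minus[OF DERIV_ident]]]])
      then show ?thesis by (simp add: algebra_simps)
    qed
    show "integrable lborel (\<lambda>y. hh \<theta> g y * pd \<theta> y ^ j * exp (- s * pd \<theta> y))"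
      by (rule M_int[OF gm W s])
    show "integrable lborel (\<lambda>y. fact (Suc j) / e ^ Suc j * (hh \<theta> g y * exp (- s0 * pd \<theta> y)))"
      using W by simp
    show "\<bar>- (hh \<theta> g y * pd \<theta> y ^ Suc j * exp (- t * pd \<theta> y))\<bar>
           \<le> fact (Suc j) / e ^ Suc j * (hh \<theta> g y * exp (- s0 * pd \<theta> y))" if t: "t \<in> ball s e" for t y
    proof -
      have "\<bar>t - s\<bar> < e" using t by (simp add: dist_real_def abs_minus_commute)
      then have "e \<le> t - s0" unfolding e_def abs_less_iff by (auto simp: field_simps)
      then have "hh \<theta> g y * pd \<theta> y ^ Suc j * exp (- t * pd \<theta> y) \<le> fact (Suc j) / e ^ Suc j * (hh \<theta> g y * exp (- s0 * pd \<theta> y))"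
        using e by (intro M_bound pd_nonneg hh_nonneg) auto
      then show ?thesis using hh_nonneg[of \<theta> g y] pd_nonneg[of \<theta> y] by (simp add: abs_mult)
    qed
  qed
  then show ?thesis unfolding MM_def[abs_def] by simp
qed

lemma M_Ck:
  fixes \<theta> :: "real^'n"
  assumes gm: "g \<in> borel_measurable lborel"
    and W: "integrable lborel (\<lambda>y. hh \<theta> g y * exp (- s0 * pd \<theta> y))"
  shows "Ck {s0<..} k (MM \<theta> g j)"
proof (induction k arbitrary: j)
  case 0
  have "\<forall>t\<in>{s0<..}. (MM \<theta> g j has_real_derivative (\<lambda>t. - MM \<theta> g (Suc j) t) t) (at t within {s0<..})"
  proof
    fix t assume "t \<in> {s0<..}"
    then show "(MM \<theta> g j has_real_derivative (\<lambda>t. - MM \<theta> g (Suc j) t) t) (at t within {s0<..})"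
      using has_field_derivative_at_within[OF M_deriv[OF gm W, of t j]] by simp
  qed
  then show ?case using deriv_cont by auto
next
  case (Suc k)
  have dd: "\<forall>t\<in>{s0<..}. (MM \<theta> g j has_real_derivative (\<lambda>t. - 1 * MM \<theta> g (Suc j) t) t) (at t within {s0<..})"
  proof
    fix t assume "t \<in> {s0<..}"
    then show "(MM \<theta> g j has_real_derivative (\<lambda>t. - 1 * MM \<theta> g (Suc j) t) t) (at t within {s0<..})"
      using has_field_derivative_at_within[OF M_deriv[OF gm W, of t j]] by simp
  qed
  have cc: "Ck {s0<..} k (\<lambda>t. - 1 * MM \<theta> g (Suc j) t)" using Ck_cmult[OF Suc.IH] .
  show ?case using Ck_SucI[OF dd cc] .
qed



lemma powr_aux:
  fixes x :: real assumes x: "0 < x"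
  shows "(1 / sqrt x) ^ N = x powr (- (real N / 2))"
proof -
  have "1 / sqrt x = x powr (- (1/2))"
    using x by (simp add: powr_minus_divide powr_half_sqrt)
  then have "(1 / sqrt x) ^ N = (x powr (- (1/2))) ^ N" by simp
  also have "\<dots> = x powr (real N * (- (1/2)))" using x by (simp add: powr_power)
  finally show ?thesis by simp
qed

lemma Risk_eq:
  fixes \<theta> :: "real^'n"
  assumes gm: "g \<in> borel_measurable lborel" and v: "0 < (1 + \<alpha>) * \<sigma>2"
  shows "Risk \<theta> \<sigma>2 g \<alpha> = (1 / sqrt (2 * pi * ((1 + \<alpha>) * \<sigma>2))) ^ CARD('n)
            * MM \<theta> g 0 (1 / (2 * ((1 + \<alpha>) * \<sigma>2)))"
proof -
  define v where "v = (1 + \<alpha>) * \<sigma>2"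
  have v0: "0 < v" using v by (simp add: v_def)
  define K where "K = (1 / sqrt (2 * pi * v)) ^ CARD('n)"
  have m1: "(\<lambda>y::real^'n. \<Prod>i\<in>UNIV. normal_density (\<theta> $ i) (sqrt v) (y $ i)) \<in> borel_measurable lborel"
    by measurable
  have "Risk \<theta> \<sigma>2 g \<alpha> = (\<integral>y. hh \<theta> g y \<partial>(gauss_vec \<theta> v))"
    by (simp add: Risk_def Y_law_def hh_def v_def)
  also have "\<dots> = (\<integral>y. (\<Prod>i\<in>UNIV. normal_density (\<theta> $ i) (sqrt v) (y $ i)) *\<^sub>R hh \<theta> g y \<partial>lborel)"
    unfolding gauss_vec_def
    by (rule integral_density[OF hh_meas[OF gm] m1]) (auto simp: prod_nonneg)
  also have "\<dots> = (\<integral>y. K * (hh \<theta> g y * pd \<theta> y ^ 0 * exp (- (1 / (2 * v)) * pd \<theta> y)) \<partial>lborel)"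
    by (intro Bochner_Integration.integral_cong refl) (simp add: prod_nd[OF v0] K_def)
  also have "\<dots> = K * MM \<theta> g 0 (1 / (2 * v))"
    unfolding MM_def by simp
  finally show ?thesis by (simp add: K_def v_def)
qed


theorem proposition2:
  fixes \<theta> :: "real^'n" and \<sigma>2 \<beta> :: real and k :: nat
    and g :: "real^'n \<Rightarrow> real^'n"
  assumes "\<sigma>2 > 0"
    and "g \<in> borel_measurable lborel"
    and "\<beta> > 0"
    and "\<forall>m\<le>k. (\<integral>\<^sup>+ y. ennreal ((norm (g y))\<^sup>2 * (norm (y - \<theta>)) ^ (2 * m))
                      \<partial>(Y_law \<theta> \<sigma>2 \<beta>)) < \<infinity>"
  shows "k_times_cont_diff_on k (Risk \<theta> \<sigma>2 g) {0..<\<beta>}"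
proof -
  note sig = assms(1) and gm = assms(2) and bet = assms(3)
  define v0 where "v0 = (1 + \<beta>) * \<sigma>2"
  have v0: "0 < v0" using sig bet by (simp add: v0_def)
  define s0 where "s0 = 1 / (2 * v0)"
  have s0: "0 < s0" using v0 by (simp add: s0_def)
  have hyp: "(\<integral>\<^sup>+ y. ennreal ((norm (g y))\<^sup>2) \<partial>(gauss_vec \<theta> v0)) < \<infinity>"
    using assms(4)[rule_format, of 0] by (simp add: Y_law_def v0_def)
  have ig: "integrable lborel (\<lambda>y. (norm (g y))\<^sup>2 * exp (- s0 * pd \<theta> y))"
    using int_g[OF v0 gm hyp] by (simp add: s0_def)
  have W: "integrable lborel (\<lambda>y. hh \<theta> g y * exp (- s0 * pd \<theta> y))"
    by (rule int_W[OF s0 gm ig])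
  have MC: "Ck {s0<..} k (MM \<theta> g 0)" by (rule M_Ck[OF gm W])
  define S where "S = {0..<\<beta>}"
  define Kf where "Kf \<alpha> = (2 * pi * \<sigma>2 + (2 * pi * \<sigma>2) * \<alpha>) powr (- (real CARD('n) / 2))" for \<alpha>
  define wf where "wf \<alpha> = (1 / (2 * \<sigma>2)) * (1 + 1 * \<alpha>) powr (-1)" for \<alpha>
  have CK: "Ck S k Kf"
  proof -
    have "Ck S k (\<lambda>\<alpha>. (\<lambda>t. t powr (- (real CARD('n) / 2))) (2 * pi * \<sigma>2 + (2 * pi * \<sigma>2) * \<alpha>))"
    proof (rule Ck_comp[OF open_greaterThan _ Ck_powr Ck_affine])
      fix t assume "t \<in> S"
      then show "2 * pi * \<sigma>2 + (2 * pi * \<sigma>2) * t \<in> {0<..}"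
        using sig by (simp add: S_def add_pos_nonneg)
    qed
    then show ?thesis by (simp add: Kf_def[abs_def])
  qed
  have CW: "Ck S k wf"
  proof -
    have "Ck S k (\<lambda>\<alpha>. (\<lambda>t. t powr (-1)) (1 + 1 * \<alpha>))"
    proof (rule Ck_comp[OF open_greaterThan _ Ck_powr Ck_affine])
      fix t assume "t \<in> S"
      then show "1 + 1 * t \<in> {0<..}" by (simp add: S_def)
    qed
    then have "Ck S k (\<lambda>\<alpha>. (1 / (2 * \<sigma>2)) * (1 + 1 * \<alpha>) powr (-1))" by (rule Ck_cmult)
    then show ?thesis by (simp add: wf_def[abs_def])
  qed
  have CM: "Ck S k (\<lambda>\<alpha>. MM \<theta> g 0 (wf \<alpha>))"
  proof (rule Ck_comp[OF open_greaterThan _ MC CW])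
    fix t assume t: "t \<in> S"
    then have t0: "0 \<le> t" "t < \<beta>" by (auto simp: S_def)
    have "wf t = 1 / (2 * ((1 + t) * \<sigma>2))" using t0 by (simp add: wf_def powr_neg_one)
    moreover have "1 / (2 * ((1 + \<beta>) * \<sigma>2)) < 1 / (2 * ((1 + t) * \<sigma>2))"
      using t0 sig by (intro divide_strict_left_mono mult_strict_left_mono mult_strict_right_mono) auto
    ultimately show "wf t \<in> {s0<..}" by (simp add: s0_def v0_def)
  qed
  have CR: "Ck S k (\<lambda>\<alpha>. Kf \<alpha> * MM \<theta> g 0 (wf \<alpha>))" by (rule Ck_mult[OF CK CM])
  have "Ck S k (Risk \<theta> \<sigma>2 g)"
  proof (rule Ck_cong[OF CR])
    fix t assume t: "t \<in> S"
    then have t0: "0 \<le> t" by (auto simp: S_def)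
    have v: "0 < (1 + t) * \<sigma>2" using t0 sig by simp
    have x: "0 < 2 * pi * ((1 + t) * \<sigma>2)" using v by simp
    have "Kf t = (2 * pi * ((1 + t) * \<sigma>2)) powr (- (real CARD('n) / 2))"
      by (simp add: Kf_def algebra_simps)
    also have "\<dots> = (1 / sqrt (2 * pi * ((1 + t) * \<sigma>2))) ^ CARD('n)"
      by (rule powr_aux[OF x, symmetric])
    finally have "Kf t = (1 / sqrt (2 * pi * ((1 + t) * \<sigma>2))) ^ CARD('n)" .
    moreover have "wf t = 1 / (2 * ((1 + t) * \<sigma>2))" using t0 by (simp add: wf_def powr_neg_one)
    ultimately show "Kf t * MM \<theta> g 0 (wf t) = Risk \<theta> \<sigma>2 g t"
      using Risk_eq[OF gm v] by simp
  qed
  then show ?thesis unfolding S_def by (rule Ck_imp)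
qed

end
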